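(* For every integer $n\geq 2$, the $n$-dimensional volume of the polytope $$\Pi_n=\{(u_1,\ldots,u_n)\in\mathbf{R}^n : u_i>0,\ u_i+u_{i+1}<\tfrac{\pi}{2}\ (1\le i\le n)\},$$ where indices are taken cyclically so that $u_{n+1}:=u_1$, equals $S(n)=\sum_{k=-\infty}^{\infty}\frac{1}{(4k+1)^n}$.
   Context: For integers $n\ge 2$ the sum $S(n)=\sum_{k\in\mathbf{Z}}(4k+1)^{-n}$ converges absolutely. *)

theory Defs
  imports "HOL-Analysis.Analysis"
begin

text \<open>Points of R^n are represented as extensional functions on the index set {0..<n};
  n-dimensional Lebesgue (Borel) volume is the product measure of lborel over {0..<n}.\<close>

definition Pi_poly :: "nat \<Rightarrow> (nat \<Rightarrow> real) set" where
  "Pi_poly n = {u \<in> {0..<n} \<rightarrow>\<^sub>E UNIV.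
      (\<forall>i<n. 0 < u i) \<and> (\<forall>i<n. u i + u ((i + 1) mod n) < pi / 2)}"

definition S_sum :: "nat \<Rightarrow> real" where
  "S_sum n = (\<Sum>\<^sub>\<infinity> k::int. 1 / (real_of_int (4 * k + 1)) ^ n)"

end

theory Submission
  imports Defs "HOL-Analysis.Analysis"
begin


definition w :: "real \<Rightarrow> real \<Rightarrow> ennreal" where
  "w x y = indicator {0<..} y * indicator {..<pi/2} (x+y)"

lemma w_meas[measurable]: "(\<lambda>(x,y). w x y) \<in> borel_measurable (lborel \<Otimes>\<^sub>M lborel)"
  unfolding w_def by measurable

fun Wk :: "nat \<Rightarrow> real \<Rightarrow> real \<Rightarrow> ennreal" where
  "Wk 0 x z = w x z"
| "Wk (Suc m) x y = (\<integral>\<^sup>+z. Wk m x z * w z y \<partial>lborel)"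

lemma Wk_meas[measurable]: "(\<lambda>(x,y). Wk m x y) \<in> borel_measurable (lborel \<Otimes>\<^sub>M lborel)"
proof (induction m)
  case 0 then show ?case by simp
next
  case (Suc m)
  have "(\<lambda>(p,z). Wk m (fst p) z * w z (snd p)) \<in> borel_measurable ((lborel \<Otimes>\<^sub>M lborel) \<Otimes>\<^sub>M lborel)"
    using Suc by measurable
  from lborel.borel_measurable_nn_integral[OF this] show ?case
    by (simp add: case_prod_beta')
qed

lemma lemA:
  assumes phi[measurable]: "(\<lambda>(x,y). \<phi> x y) \<in> borel_measurable (lborel \<Otimes>\<^sub>M lborel)"
  shows "(\<integral>\<^sup>+u. \<phi> (u 0) (u (Suc k)) * (\<Prod>i<Suc k. w (u i) (u (Suc i))) \<partial>PiM {0..<Suc (Suc k)} (\<lambda>_. lborel))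
     = (\<integral>\<^sup>+x. \<integral>\<^sup>+z. \<phi> x z * Wk k x z \<partial>lborel \<partial>lborel)"
  using phi
proof (induction k arbitrary: \<phi>)
  case 0
  then have [measurable]: "(\<lambda>(x,y). \<phi> x y) \<in> borel_measurable (lborel \<Otimes>\<^sub>M lborel)" by simp
  interpret product_sigma_finite "\<lambda>_. lborel" by standard
  have e: "{0..<Suc (Suc 0)} = insert (Suc 0) {0}" by auto
  have "(\<integral>\<^sup>+u. \<phi> (u 0) (u (Suc 0)) * (\<Prod>i<Suc 0. w (u i) (u (Suc i))) \<partial>PiM {0..<Suc (Suc 0)} (\<lambda>_. lborel))
     = (\<integral>\<^sup>+u. (\<integral>\<^sup>+y. \<phi> (u 0) y * w (u 0) y \<partial>lborel) \<partial>PiM {0::nat} (\<lambda>_. lborel))"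
    unfolding e apply (subst product_nn_integral_insert) apply (simp_all) apply measurable done
  also have "\<dots> = (\<integral>\<^sup>+x. (\<integral>\<^sup>+y. \<phi> x y * w x y \<partial>lborel) \<partial>lborel)"
    by (rule product_nn_integral_singleton) measurable
  finally show ?case by simp
next
  case (Suc k)
  then have [measurable]: "(\<lambda>(x,y). \<phi> x y) \<in> borel_measurable (lborel \<Otimes>\<^sub>M lborel)" by simp
  interpret product_sigma_finite "\<lambda>_. lborel" by standard
  define \<psi> where "\<psi> x z = (\<integral>\<^sup>+y. \<phi> x y * w z y \<partial>lborel)" for x z
  have psim[measurable]: "(\<lambda>(x,y). \<psi> x y) \<in> borel_measurable (lborel \<Otimes>\<^sub>M lborel)"
  proof -
    have "(\<lambda>(p,y). \<phi> (fst p) y * w (snd p) y) \<in> borel_measurable ((lborel \<Otimes>\<^sub>M lborel) \<Otimes>\<^sub>M lborel)"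
      by measurable
    from lborel.borel_measurable_nn_integral[OF this] show ?thesis
      by (simp add: case_prod_beta' \<psi>_def)
  qed
  have e: "{0..<Suc (Suc (Suc k))} = insert (Suc (Suc k)) {0..<Suc (Suc k)}" by auto
  have "(\<integral>\<^sup>+u. \<phi> (u 0) (u (Suc (Suc k))) * (\<Prod>i<Suc (Suc k). w (u i) (u (Suc i))) \<partial>PiM {0..<Suc (Suc (Suc k))} (\<lambda>_. lborel))
     = (\<integral>\<^sup>+u. (\<integral>\<^sup>+y. \<phi> (u 0) y * (\<Prod>i<Suc k. w (u i) (u (Suc i))) * w (u (Suc k)) y \<partial>lborel) \<partial>PiM {0..<Suc (Suc k)} (\<lambda>_. lborel))"
    unfolding e
    by (subst product_nn_integral_insert) (auto intro!: nn_integral_cong prod.cong simp: mult.assoc)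
  also have "\<dots> = (\<integral>\<^sup>+u. \<psi> (u 0) (u (Suc k)) * (\<Prod>i<Suc k. w (u i) (u (Suc i))) \<partial>PiM {0..<Suc (Suc k)} (\<lambda>_. lborel))"
    unfolding \<psi>_def
    by (intro nn_integral_cong) (simp add: nn_integral_multc[symmetric] nn_integral_cmult[symmetric] mult_ac)
  also have "\<dots> = (\<integral>\<^sup>+x. \<integral>\<^sup>+z. \<psi> x z * Wk k x z \<partial>lborel \<partial>lborel)"
    by (rule Suc.IH) (rule psim)
  also have "\<dots> = (\<integral>\<^sup>+x. \<integral>\<^sup>+z. \<integral>\<^sup>+y. \<phi> x y * (Wk k x z * w z y) \<partial>lborel \<partial>lborel \<partial>lborel)"
    unfolding \<psi>_def
    by (intro nn_integral_cong) (simp add: nn_integral_multc[symmetric] nn_integral_cmult[symmetric] mult_ac)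
  also have "\<dots> = (\<integral>\<^sup>+x. \<integral>\<^sup>+y. \<integral>\<^sup>+z. \<phi> x y * (Wk k x z * w z y) \<partial>lborel \<partial>lborel \<partial>lborel)"
  proof (rule nn_integral_cong)
    fix x
    show "(\<integral>\<^sup>+z. \<integral>\<^sup>+y. \<phi> x y * (Wk k x z * w z y) \<partial>lborel \<partial>lborel)
        = (\<integral>\<^sup>+y. \<integral>\<^sup>+z. \<phi> x y * (Wk k x z * w z y) \<partial>lborel \<partial>lborel)"
      using lborel_pair.Fubini'[of "\<lambda>y z. \<phi> x y * (Wk k x z * w z y)"] by simp
  qed
  also have "\<dots> = (\<integral>\<^sup>+x. \<integral>\<^sup>+y. \<phi> x y * Wk (Suc k) x y \<partial>lborel \<partial>lborel)"
    by (intro nn_integral_cong) (simp add: nn_integral_cmult)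
  finally show ?case .
qed

lemma prod_w: "(\<Prod>i<m. w (u i) (u (Suc i))) = (if \<forall>i<m. 0 < u (Suc i) \<and> u i + u (Suc i) < pi/2 then 1 else 0)"
  by (induction m) (auto simp: w_def less_Suc_eq)

lemma Pi_poly_sets: "Pi_poly n \<in> sets (PiM {0..<n} (\<lambda>_. lborel))"
proof -
  have "Pi_poly n = {u \<in> space (PiM {0..<n} (\<lambda>_. lborel)).
      (\<forall>i\<in>{..<n}. 0 < u i) \<and> (\<forall>i\<in>{..<n}. u i + u ((i + 1) mod n) < pi / 2)}"
    by (auto simp: Pi_poly_def space_PiM)
  also have "\<dots> \<in> sets (PiM {0..<n} (\<lambda>_. lborel))"
    by measurable
  finally show ?thesis .
qed

lemma vol_reduce:
  "emeasure (PiM {0..<Suc (Suc k)} (\<lambda>_. lborel)) (Pi_poly (Suc (Suc k)))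
   = (\<integral>\<^sup>+x. indicator {0<..} x * Wk (Suc k) x x \<partial>lborel)"
proof -
  let ?n = "Suc (Suc k)"
  define \<phi> where "\<phi> x z = indicator {0<..} x * w z x" for x z :: real
  have [measurable]: "(\<lambda>(x,y). \<phi> x y) \<in> borel_measurable (lborel \<Otimes>\<^sub>M lborel)"
    unfolding \<phi>_def w_def by measurable
  have "emeasure (PiM {0..<?n} (\<lambda>_. lborel)) (Pi_poly ?n)
       = (\<integral>\<^sup>+u. indicator (Pi_poly ?n) u \<partial>PiM {0..<?n} (\<lambda>_. lborel))"
    using Pi_poly_sets by simp
  also have "\<dots> = (\<integral>\<^sup>+u. \<phi> (u 0) (u (Suc k)) * (\<Prod>i<Suc k. w (u i) (u (Suc i))) \<partial>PiM {0..<?n} (\<lambda>_. lborel))"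
  proof (rule nn_integral_cong)
    fix u :: "nat \<Rightarrow> real" assume u: "u \<in> space (PiM {0..<?n} (\<lambda>_. lborel))"
    have modeq: "(i + 1) mod ?n = (if i = Suc k then 0 else Suc i)" if "i < ?n" for i
      using that by (cases "i = Suc k") simp_all
    have "u \<in> Pi_poly ?n \<longleftrightarrow> (0 < u 0 \<and> u (Suc k) + u 0 < pi/2) \<and>
          (\<forall>i<Suc k. 0 < u (Suc i) \<and> u i + u (Suc i) < pi/2)"
    proof -
      have "u \<in> Pi_poly ?n \<longleftrightarrow> (\<forall>i<?n. 0 < u i) \<and> (\<forall>i<?n. u i + u ((i + 1) mod ?n) < pi / 2)"
        using u by (auto simp: Pi_poly_def space_PiM)
      also have "\<dots> \<longleftrightarrow> (\<forall>i<?n. 0 < u i) \<and> (\<forall>i<?n. u i + u (if i = Suc k then 0 else Suc i) < pi / 2)"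
        using modeq by auto
      also have "\<dots> \<longleftrightarrow> (0 < u 0 \<and> u (Suc k) + u 0 < pi/2) \<and>
          (\<forall>i<Suc k. 0 < u (Suc i) \<and> u i + u (Suc i) < pi/2)"
      proof safe
        fix i assume H: "\<forall>i<?n. 0 < u i" "\<forall>i<?n. u i + u (if i = Suc k then 0 else Suc i) < pi / 2"
        show "0 < u 0" using H(1) by auto
        show "u (Suc k) + u 0 < pi/2" using H(2)[rule_format, of "Suc k"] by simp
        show "0 < u (Suc i)" if "i < Suc k" using H(1) that by auto
        show "u i + u (Suc i) < pi/2" if "i < Suc k" using H(2)[rule_format, of i] that by auto
      next
        fix i assume H: "0 < u 0" "u (Suc k) + u 0 < pi/2" "\<forall>i<Suc k. 0 < u (Suc i) \<and> u i + u (Suc i) < pi/2"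
        show "0 < u i" if "i < ?n" for i
          using H that by (cases i) auto
        show "u i + u (if i = Suc k then 0 else Suc i) < pi / 2" if "i < ?n" for i
          using H that by (cases "i = Suc k") auto
      qed
      finally show ?thesis .
    qed
    then show "indicator (Pi_poly ?n) u = \<phi> (u 0) (u (Suc k)) * (\<Prod>i<Suc k. w (u i) (u (Suc i)))"
      unfolding prod_w \<phi>_def by (auto simp: w_def indicator_def)
  qed
  also have "\<dots> = (\<integral>\<^sup>+x. \<integral>\<^sup>+z. \<phi> x z * Wk k x z \<partial>lborel \<partial>lborel)"
    by (rule lemA) measurable
  also have "\<dots> = (\<integral>\<^sup>+x. indicator {0<..} x * Wk (Suc k) x x \<partial>lborel)"
    unfolding \<phi>_def
    by (intro nn_integral_cong) (simp add: nn_integral_cmult[symmetric] mult_ac)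
  finally show ?thesis .
qed




lemma series_has_integral:
  fixes f :: "nat \<Rightarrow> real \<Rightarrow> real"
  assumes cont: "\<And>j. continuous_on {a..b} (f j)"
    and bound: "\<And>j x. x \<in> {a..b} \<Longrightarrow> \<bar>f j x\<bar> \<le> M j" and M: "summable M"
    and int: "\<And>j. (f j has_integral I j) {a..b}"
  shows "summable I \<and> ((\<lambda>x. \<Sum>j. f j x) has_integral (\<Sum>j. I j)) {a..b}"
proof -
  have u: "uniform_limit {a..b} (\<lambda>n x. \<Sum>i<n. f i x) (\<lambda>x. \<Sum>i. f i x) sequentially"
    by (rule Weierstrass_m_test) (use bound M in auto)
  have c: "continuous_on {a..b} (\<lambda>x. \<Sum>i<n. f i x)" for n
    by (intro continuous_on_sum cont)
  obtain I' J where I': "\<And>n. ((\<lambda>x. \<Sum>i<n. f i x) has_integral I' n) {a..b}"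
    and J: "((\<lambda>x. \<Sum>i. f i x) has_integral J) {a..b}" and lim: "I' \<longlonglongrightarrow> J"
    using uniform_limit_integral[OF u c] by auto
  have "I' n = (\<Sum>i<n. I i)" for n
    using has_integral_unique[OF I'[of n] has_integral_sum[of "{..<n}" f I, OF _ int]] by simp
  then have "I' = (\<lambda>n. \<Sum>i<n. I i)" by auto
  with lim have "I sums J" unfolding sums_def by simp
  with J show ?thesis by (simp add: sums_iff)
qed



lemma ftc:
  assumes "a \<le> b" "\<And>x. (F has_real_derivative f x) (at x)"
  shows "(f has_integral (F b - F a)) {a..b}"
  using assms
  by (intro fundamental_theorem_of_calculus)
     (auto simp: has_real_derivative_iff_has_vector_derivative[symmetric] intro: has_field_derivative_at_within)

lemma cos_lin_has_integral:
  fixes r a b :: real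
  assumes "r \<noteq> 0" "a \<le> b"
  shows "((\<lambda>t. cos (r*t)) has_integral ((sin (r*b) - sin (r*a))/r)) {a..b}"
proof -
  have d: "((\<lambda>t. sin (r*t)/r) has_real_derivative cos (r*x)) (at x)" for x
    using assms by (auto intro!: derivative_eq_intros)
  have "((\<lambda>t. cos (r*t)) has_integral (sin (r*b)/r - sin (r*a)/r)) {a..b}"
    using ftc[OF assms(2) d] by simp
  then show ?thesis by (simp add: diff_divide_distrib)
qed

lemma sin_diff_nat_pi: "sin ((real p - real k) * pi) = 0"
  by (simp add: left_diff_distrib sin_diff)

lemma cos_cos_has_integral:
  "((\<lambda>t. cos (real p * t) * cos (real k * t)) has_integral
      (if p = k then (if p = 0 then pi else pi/2) else 0)) {0..pi}"
proof -
  have e: "cos (real p * t) * cos (real k * t) = cos ((real p - real k) * t)/2 + cos ((real p + real k) * t)/2" for t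
    by (simp add: cos_times_cos left_diff_distrib distrib_right add_divide_distrib)
  have I1: "((\<lambda>t. cos ((real p - real k) * t)/2) has_integral (if p = k then pi/2 else 0)) {0..pi}"
  proof (cases "p = k")
    case True then show ?thesis using has_integral_const_real[of "1/2::real" 0 pi] by simp
  next
    case False
    then have "real p - real k \<noteq> 0" by simp
    from has_integral_divide[OF cos_lin_has_integral[OF this, of 0 pi], of 2] False
    show ?thesis by (simp add: sin_diff_nat_pi)
  qed
  have I2: "((\<lambda>t. cos ((real p + real k) * t)/2) has_integral (if p = 0 \<and> k = 0 then pi/2 else 0)) {0..pi}"
  proof (cases "p = 0 \<and> k = 0")
    case True then show ?thesis using has_integral_const_real[of "1/2::real" 0 pi] by simp
  next
    case False
    then have "real p + real k \<noteq> 0" by (metis add_is_0 of_nat_0_eq_iff of_nat_add)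
    from has_integral_divide[OF cos_lin_has_integral[OF this, of 0 pi], of 2] False
    show ?thesis by (auto simp flip: of_nat_add)
  qed
  from has_integral_add[OF I1 I2] show ?thesis
    unfolding e by (auto split: if_splits)
qed

definition godd :: "real \<Rightarrow> real" where
  "godd t = (\<Sum>j. cos (real (2*j+1) * t) / real (2*j+1)^2)"

lemma summable_odd_sq: "summable (\<lambda>j::nat. 1 / real (2*j+1)^2)"
proof (rule summable_comparison_test[OF _ inverse_power_summable[of 2]])
  show "\<exists>N. \<forall>n\<ge>N. norm (1 / real (2*n+1)^2) \<le> inverse (real n ^ 2)"
    by (intro exI[of _ 1]) (auto simp: field_simps)
qed simp

lemma summable_cos_odd_sq: "summable (\<lambda>j::nat. cos (real (2*j+1) * t) / real (2*j+1)^2)"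
  by (rule summable_comparison_test[OF _ summable_odd_sq]) (auto simp: divide_simps)

lemma godd_cos_has_integral:
  "((\<lambda>t. godd t * cos (real k * t)) has_integral (if odd k then pi / (2 * real k^2) else 0)) {0..pi}"
proof -
  define f where "f j t = cos (real (2*j+1) * t) * cos (real k * t) / real (2*j+1)^2" for j t
  define I where "I j = (if k = 2*j+1 then pi / (2 * real k^2) else 0)" for j
  have "summable I \<and> ((\<lambda>x. \<Sum>j. f j x) has_integral (\<Sum>j. I j)) {0..pi}"
  proof (rule series_has_integral)
    show "continuous_on {0..pi} (f j)" for j unfolding f_def by (intro continuous_intros) auto
    show "\<bar>f j x\<bar> \<le> 1 / real (2*j+1)^2" for j x
      unfolding f_def by (auto simp: abs_mult divide_simps intro!: mult_le_one)
    show "summable (\<lambda>j::nat. 1 / real (2*j+1)^2)" by (rule summable_odd_sq)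
    show "(f j has_integral I j) {0..pi}" for j
      using has_integral_divide[OF cos_cos_has_integral[of "2*j+1" k], of "real (2*j+1)^2"]
      unfolding f_def I_def by (auto simp: field_simps)
  qed
  moreover have "(\<lambda>x. \<Sum>j. f j x) = (\<lambda>t. godd t * cos (real k * t))"
    unfolding f_def godd_def
    by (intro ext, subst suminf_mult2[OF summable_cos_odd_sq]) (simp add: field_simps)
  moreover have "(\<Sum>j. I j) = (if odd k then pi / (2 * real k^2) else 0)"
  proof (cases "odd k")
    case True
    then obtain j0 where k: "k = 2*j0+1" by (metis oddE)
    have "I = (\<lambda>j. if j = j0 then pi / (2 * real k^2) else 0)"
      unfolding I_def k by auto
    then show ?thesis using sums_single[of j0 "\<lambda>_. pi / (2 * real k^2)"] True by (simp add: sums_iff)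
  next
    case False
    have "I = (\<lambda>_. 0)" unfolding I_def by (rule ext) (use False in auto)
    then show ?thesis using False by simp
  qed
  ultimately show ?thesis by simp
qed



definition Lfun :: "real \<Rightarrow> real" where "Lfun t = pi * (pi - 2*t) / 8"

lemma Lfun_cos_has_integral:
  "((\<lambda>t. Lfun t * cos (real k * t)) has_integral (if odd k then pi / (2 * real k^2) else 0)) {0..pi}"
proof (cases "k = 0")
  case True
  have d: "((\<lambda>t. pi*pi*t/8 - pi*t^2/8) has_real_derivative Lfun x) (at x)" for x
    unfolding Lfun_def by (auto intro!: derivative_eq_intros simp: field_simps)
  from ftc[OF _ d, of 0 pi] True show ?thesis by (simp add: power2_eq_square)
next
  case False
  define F where "F t = (pi^2/8 - pi*t/4) * sin (real k * t) / real k - (pi/4) * cos (real k * t) / real k^2" for t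
  have d: "(F has_real_derivative Lfun x * cos (real k * x)) (at x)" for x
    unfolding F_def Lfun_def using False
    by (auto intro!: derivative_eq_intros simp: field_simps power2_eq_square)
  have "F pi - F 0 = (pi/4) * (1 - (-1)^k) / real k^2" unfolding F_def by (simp add: diff_divide_distrib right_diff_distrib)
  then have "F pi - F 0 = (if odd k then pi / (2 * real k^2) else 0)" by (auto simp: field_simps)
  with ftc[OF _ d, of 0 pi] show ?thesis by simp
qed

lemma godd_cont: "continuous_on A godd"
proof -
  have u: "uniform_limit A (\<lambda>n x. \<Sum>j<n. cos (real (2*j+1) * x) / real (2*j+1)^2) godd sequentially"
    unfolding godd_def
    by (rule Weierstrass_m_test[OF _ summable_odd_sq]) (auto simp: divide_simps)
  show ?thesis
    by (rule uniform_limit_theorem[OF _ u]) (auto intro!: always_eventually continuous_intros)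
qed

definition phi :: "real \<Rightarrow> real" where "phi t = godd t - Lfun t"

lemma phi_cont: "continuous_on A phi"
  unfolding phi_def Lfun_def by (intro continuous_intros godd_cont) auto

lemma phi_cos_0: "((\<lambda>t. phi t * cos (real k * t)) has_integral 0) {0..pi}"
  using has_integral_diff[OF godd_cos_has_integral[of k] Lfun_cos_has_integral[of k]]
  by (simp add: phi_def left_diff_distrib)

lemma cos_mult_cos_k: "cos t * cos (real k * t) = (cos (real (k+1) * t) + cos (real (if k = 0 then 1 else k - 1) * t)) / 2"
proof (cases "k = 0")
  case True then show ?thesis by simp
next
  case False
  have "cos t * cos (real k * t) = (cos (t - real k * t) + cos (t + real k * t)) / 2"
    by (rule cos_times_cos)
  also have "cos (t - real k * t) = cos (real (k - 1) * t)"
    using False by (subst cos_minus[symmetric]) (simp add: of_nat_diff algebra_simps)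
  finally show ?thesis using False by (simp add: algebra_simps)
qed

lemma cos_mult_cos_ex: "\<exists>k'. \<forall>t. cos t * cos (real k * t) = (cos (real (k+1) * t) + cos (real k' * t)) / 2"
  using cos_mult_cos_k[of _ k] by blast

lemma phi_cospow_cos_0: "((\<lambda>t. phi t * cos t ^ j * cos (real k * t)) has_integral 0) {0..pi}"
proof (induction j arbitrary: k)
  case 0 then show ?case using phi_cos_0[of k] by simp
next
  case (Suc j)
  obtain k' where k': "\<And>t. cos t * cos (real k * t) = (cos (real (k+1) * t) + cos (real k' * t)) / 2"
    using cos_mult_cos_ex[of k] by blast
  have e: "phi t * cos t ^ Suc j * cos (real k * t) =
     (phi t * cos t ^ j * cos (real (k+1) * t)) / 2 + (phi t * cos t ^ j * cos (real k' * t)) / 2" for t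
  proof -
    have "phi t * cos t ^ Suc j * cos (real k * t) = phi t * cos t ^ j * (cos t * cos (real k * t))"
      by (simp add: mult_ac)
    also have "\<dots> = phi t * cos t ^ j * ((cos (real (k+1) * t) + cos (real k' * t)) / 2)"
      by (simp only: k')
    finally show ?thesis by (simp add: algebra_simps add_divide_distrib)
  qed
  show ?case unfolding e
    using has_integral_add[OF has_integral_divide[OF Suc.IH[of "k+1"]] has_integral_divide[OF Suc.IH[of k']], of 2 2]
    by simp
qed

lemma phi_poly_0:
  assumes "real_polynomial_function P"
  shows "((\<lambda>t. phi t * P (cos t)) has_integral 0) {0..pi}"
proof -
  obtain a n where P: "P = (\<lambda>x. \<Sum>i\<le>n. a i * x^i)"
    using assms real_polynomial_function_iff_sum by blast
  have "((\<lambda>t. \<Sum>i\<le>n. a i * (phi t * cos t ^ i * cos (real 0 * t))) has_integral (\<Sum>i\<le>n. a i * 0)) {0..pi}"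
    by (intro has_integral_sum has_integral_mult_right phi_cospow_cos_0) auto
  then show ?thesis unfolding P by (simp add: sum_distrib_left mult_ac)
qed

lemma phi_zero:
  assumes t: "t \<in> {0..pi}"
  shows "phi t = 0"
proof -
  obtain B where B: "\<And>x. x \<in> {0..pi} \<Longrightarrow> \<bar>phi x\<bar> \<le> B"
    using compact_imp_bounded[OF compact_continuous_image[OF phi_cont compact_Icc[of 0 pi]]]
    unfolding bounded_iff by (force simp: real_norm_def)
  have sqint: "(\<lambda>t. phi t ^ 2) integrable_on {0..pi}"
    by (intro integrable_continuous_interval continuous_intros phi_cont)
  have le: "integral {0..pi} (\<lambda>t. phi t ^ 2) \<le> B * e * pi" if e: "e > 0" for e
  proof -
    have pc: "continuous_on {-1..1} (\<lambda>s. phi (arccos s))"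
      by (intro continuous_on_compose2[OF phi_cont continuous_on_arccos']) auto
    obtain P where P: "real_polynomial_function P" "\<And>s. s \<in> {-1..1} \<Longrightarrow> \<bar>phi (arccos s) - P s\<bar> < e"
      using Stone_Weierstrass_real_polynomial_function[OF compact_Icc pc e] by blast
    have Pt: "\<bar>phi t - P (cos t)\<bar> < e" if "t \<in> {0..pi}" for t
      using P(2)[of "cos t"] that by (simp add: arccos_cos)
    have Pc: "continuous_on {0..pi} (\<lambda>t. P (cos t))"
      by (intro continuous_on_compose2[OF continuous_on_polymonial_function[OF P(1)[unfolded real_polynomial_function_eq]]]) (auto intro: continuous_intros)
    have "integral {0..pi} (\<lambda>t. phi t ^ 2) = integral {0..pi} (\<lambda>t. phi t * (phi t - P (cos t)))"
    proof -
      have "integral {0..pi} (\<lambda>t. phi t * (phi t - P (cos t))) =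
            integral {0..pi} (\<lambda>t. phi t ^ 2) - integral {0..pi} (\<lambda>t. phi t * P (cos t))"
        by (simp add: right_diff_distrib power2_eq_square integral_diff
            integrable_continuous_interval continuous_intros phi_cont Pc)
      moreover have "integral {0..pi} (\<lambda>t. phi t * P (cos t)) = 0"
        using phi_poly_0[OF P(1)] by (rule integral_unique)
      ultimately show ?thesis by simp
    qed
    also have "\<dots> \<le> integral {0..pi} (\<lambda>t. B * e)"
    proof (rule integral_le)
      show "(\<lambda>t. phi t * (phi t - P (cos t))) integrable_on {0..pi}"
        by (intro integrable_continuous_interval continuous_intros phi_cont Pc)
      show "(\<lambda>t. B * e) integrable_on {0..pi}" by (rule integrable_const_ivl)
      fix x assume x: "x \<in> {0..pi}"
      have "phi x * (phi x - P (cos x)) \<le> \<bar>phi x\<bar> * \<bar>phi x - P (cos x)\<bar>"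
        by (metis abs_ge_self abs_mult)
      also have "\<dots> \<le> B * e"
        using B[OF x] Pt[OF x] by (intro mult_mono) auto
      finally show "phi x * (phi x - P (cos x)) \<le> B * e" .
    qed
    also have "\<dots> = B * e * pi" by simp
    finally show ?thesis .
  qed
  have B0: "B \<ge> 0" using B[of 0] by auto
  have "integral {0..pi} (\<lambda>t. phi t ^ 2) \<le> 0"
  proof (rule ccontr)
    assume "\<not> ?thesis"
    then have pos: "integral {0..pi} (\<lambda>t. phi t ^ 2) > 0" by simp
    define e where "e = integral {0..pi} (\<lambda>t. phi t ^ 2) / (2 * (B + 1) * pi)"
    have e0: "e > 0" unfolding e_def using pos B0 by (auto intro!: divide_pos_pos)
    have "B * e * pi \<le> (B + 1) * e * pi" using e0 by (intro mult_right_mono) auto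
    also have "\<dots> = integral {0..pi} (\<lambda>t. phi t ^ 2) / 2"
    proof -
      have "B + 1 \<noteq> 0" using B0 by simp
      then show ?thesis unfolding e_def by (simp add: divide_simps)
    qed
    finally show False using le[OF e0] pos by simp
  qed
  moreover have "integral {0..pi} (\<lambda>t. phi t ^ 2) \<ge> 0"
    by (intro integral_nonneg sqint) auto
  ultimately have "((\<lambda>t. phi t ^ 2) has_integral 0) {0..pi}"
    using sqint by (simp add: has_integral_integral[symmetric] integrable_integral) (metis antisym has_integral_integral sqint)
  then have "phi t ^ 2 = 0"
    using t pi_gt_zero
    by (intro has_integral_0_cbox_imp_0[of 0 pi "\<lambda>t. phi t ^ 2"])
       (auto intro!: continuous_intros phi_cont simp del: pi_gt_zero)
  then show ?thesis by simp
qed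

lemma godd_eq: "t \<in> {0..pi} \<Longrightarrow> godd t = pi * (pi - 2*t) / 8"
  using phi_zero[of t] unfolding phi_def Lfun_def by simp



definition oj :: "nat \<Rightarrow> real" where "oj j = real (2*j+1)"
definition lam :: "nat \<Rightarrow> real" where "lam j = (-1)^j / oj j"
definition cc :: "nat \<Rightarrow> real \<Rightarrow> real" where "cc j x = cos (oj j * x)"
definition Fk :: "nat \<Rightarrow> real \<Rightarrow> real \<Rightarrow> real" where
  "Fk m x z = (\<Sum>j. 4/pi * lam j ^ m * cc j x * cc j z)"

lemma oj_pos: "oj j > 0" unfolding oj_def by simp
lemma oj_ge1: "oj j \<ge> 1" unfolding oj_def by simp

lemma abs_lam: "\<bar>lam j\<bar> = 1 / oj j"
  unfolding lam_def using oj_pos[of j] by (simp add: abs_mult power_abs)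

lemma lam_pow_bound:
  assumes "m \<ge> 2" shows "\<bar>lam j ^ m\<bar> \<le> 1 / oj j ^ 2"
proof -
  have "\<bar>lam j ^ m\<bar> = (1 / oj j) ^ m" by (simp add: power_abs abs_lam)
  also have "\<dots> \<le> (1 / oj j) ^ 2"
    using oj_ge1[of j] assms by (intro power_decreasing) (auto simp: divide_simps)
  finally show ?thesis by (simp add: power_divide)
qed

lemma summable_Fk_bound: "summable (\<lambda>j. 4/pi * (1 / oj j ^ 2))"
  using summable_mult[OF summable_odd_sq, of "4/pi"] by (simp add: oj_def)

lemma Fk_term_bound:
  assumes "m \<ge> 2"
  shows "\<bar>4/pi * lam j ^ m * cc j x * cc j z\<bar> \<le> 4/pi * (1 / oj j ^ 2)"
proof -
  have "\<bar>4/pi * lam j ^ m * cc j x * cc j z\<bar> = 4/pi * (\<bar>lam j ^ m\<bar> * (\<bar>cc j x\<bar> * \<bar>cc j z\<bar>))"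
    by (simp add: abs_mult)
  also have "\<dots> \<le> 4/pi * (1 / oj j ^ 2 * 1)"
    using lam_pow_bound[OF assms, of j]
    by (intro mult_left_mono mult_mono mult_le_one) (auto simp: cc_def)
  finally show ?thesis by simp
qed

lemma summable_Fk: "m \<ge> 2 \<Longrightarrow> summable (\<lambda>j. 4/pi * lam j ^ m * cc j x * cc j z)"
proof (rule summable_comparison_test[OF _ summable_Fk_bound])
  assume "m \<ge> 2"
  then show "\<exists>N. \<forall>n\<ge>N. norm (4/pi * lam n ^ m * cc n x * cc n z) \<le> 4/pi * (1 / oj n ^ 2)"
    unfolding real_norm_def using Fk_term_bound by blast
qed

lemma Fk2:
  assumes x: "x \<in> {0..pi/2}" and z: "z \<in> {0..pi/2}"
  shows "Fk 2 x z = pi/2 - max x z"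
proof -
  have t: "4/pi * lam j ^ 2 * cc j x * cc j z =
    2/pi * (cos (real (2*j+1) * \<bar>x - z\<bar>) / real (2*j+1)^2) + 2/pi * (cos (real (2*j+1) * (x + z)) / real (2*j+1)^2)" for j
  proof -
    have "oj j * \<bar>x - z\<bar> = oj j * (x - z) \<or> oj j * \<bar>x - z\<bar> = - (oj j * (x - z))"
      by (auto simp: abs_if algebra_simps)
    then have A: "cos (oj j * \<bar>x - z\<bar>) = cos (oj j * (x - z))"
      by (metis cos_minus)
    have B: "lam j ^ 2 = 1 / oj j ^ 2" unfolding lam_def by (simp add: power_divide flip: power_mult)
    have C: "cos (oj j * x) * cos (oj j * z) = (cos (oj j * (x - z)) + cos (oj j * (x + z)))/2"
      by (simp add: cos_times_cos right_diff_distrib distrib_left)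
    have D: "real (2*j+1) = oj j" by (simp add: oj_def)
    have "4/pi * lam j ^ 2 * cc j x * cc j z = 4/pi * (1 / oj j ^ 2) * (cos (oj j * x) * cos (oj j * z))"
      unfolding cc_def B by (simp add: mult_ac)
    also have "\<dots> = 2/pi * (cos (oj j * (x - z)) / oj j ^2) + 2/pi * (cos (oj j * (x + z)) / oj j ^2)"
      unfolding C using oj_pos[of j] by (simp add: field_simps)
    finally show ?thesis unfolding D A .
  qed
  have "Fk 2 x z = 2/pi * godd \<bar>x - z\<bar> + 2/pi * godd (x + z)"
    unfolding Fk_def t godd_def
    using suminf_add[OF summable_mult[OF summable_cos_odd_sq[of "\<bar>x - z\<bar>"], of "2/pi"]
                        summable_mult[OF summable_cos_odd_sq[of "x + z"], of "2/pi"]]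
          suminf_mult[OF summable_cos_odd_sq[of "\<bar>x - z\<bar>"], of "2/pi"]
          suminf_mult[OF summable_cos_odd_sq[of "x + z"], of "2/pi"]
    by simp
  also have "\<dots> = 2/pi * (pi * (pi - 2*\<bar>x - z\<bar>) / 8) + 2/pi * (pi * (pi - 2*(x+z)) / 8)"
    using x z by (subst (1 2) godd_eq) auto
  also have "\<dots> = pi/2 - max x z"
  proof -
    have h: "2/pi * (pi * c / 8) = c/4" for c by (simp add: field_simps)
    show ?thesis unfolding h by (auto simp: max_def abs_if field_simps)
  qed
  finally show ?thesis .
qed

lemma sin_oj_half: "sin (oj j * (pi/2 - y)) = (-1)^j * cos (oj j * y)"
proof -
  have "oj j * (pi/2 - y) = real j * pi + pi/2 - oj j * y"
    unfolding oj_def by (simp add: field_simps)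
  then show ?thesis by (simp add: sin_diff sin_add cos_add)
qed

lemma cc_has_integral:
  assumes "y \<le> pi/2"
  shows "(cc j has_integral lam j * cc j y) {0..pi/2 - y}"
proof -
  have "(cc j has_integral (sin (oj j * (pi/2 - y)) - sin (oj j * 0)) / oj j) {0..pi/2 - y}"
    unfolding cc_def using assms oj_pos[of j]
    by (intro cos_lin_has_integral) auto
  then show ?thesis by (simp add: sin_oj_half lam_def cc_def)
qed

lemma Fk_step:
  assumes "m \<ge> 2" "y \<le> pi/2"
  shows "((\<lambda>z. Fk m x z) has_integral Fk (Suc m) x y) {0..pi/2 - y}"
proof -
  have "summable (\<lambda>j. 4/pi * lam j ^ m * cc j x * (lam j * cc j y)) \<and>
     ((\<lambda>z. \<Sum>j. 4/pi * lam j ^ m * cc j x * cc j z) has_integral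
        (\<Sum>j. 4/pi * lam j ^ m * cc j x * (lam j * cc j y))) {0..pi/2 - y}"
  proof (rule series_has_integral)
    show "continuous_on {0..pi/2 - y} (\<lambda>z. 4/pi * lam j ^ m * cc j x * cc j z)" for j
      unfolding cc_def by (intro continuous_intros)
    show "\<bar>4/pi * lam j ^ m * cc j x * cc j z\<bar> \<le> 4/pi * (1 / oj j ^ 2)" for j z
      using Fk_term_bound[OF assms(1)] .
    show "summable (\<lambda>j. 4/pi * (1 / oj j ^ 2))" by (rule summable_Fk_bound)
    show "((\<lambda>z. 4/pi * lam j ^ m * cc j x * cc j z) has_integral 4/pi * lam j ^ m * cc j x * (lam j * cc j y)) {0..pi/2 - y}" for j
      by (intro has_integral_mult_right cc_has_integral assms)
  qed
  then show ?thesis unfolding Fk_def by (simp add: mult_ac)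
qed

lemma cc_sq_has_integral: "((\<lambda>x. cc j x * cc j x) has_integral pi/4) {0..pi/2}"
proof -
  have e: "cc j x * cc j x = 1/2 + cos ((2 * oj j) * x) / 2" for x
    unfolding cc_def using cos_double_cos[of "oj j * x"] by (simp add: power2_eq_square field_simps)
  have "((\<lambda>x. 1/2 + cos ((2 * oj j) * x) / 2) has_integral
          (pi/2 * (1/2) + ((sin (2 * oj j * (pi/2)) - sin (2 * oj j * 0)) / (2 * oj j)) / 2)) {0..pi/2}"
    using oj_pos[of j]
    by (intro has_integral_add has_integral_divide cos_lin_has_integral)
       (auto intro: has_integral_const_real[of "1/2::real" 0 "pi/2", simplified])
  moreover have "sin (2 * oj j * (pi/2)) = 0"
  proof -
    have "2 * oj j * (pi/2) = real (2*j+1) * pi" unfolding oj_def by simp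
    then show ?thesis by (simp only: sin_npi)
  qed
  ultimately show ?thesis unfolding e by simp
qed

lemma Fk_diag_has_integral:
  assumes "n \<ge> 2"
  shows "((\<lambda>x. Fk n x x) has_integral (\<Sum>j. lam j ^ n)) {0..pi/2}"
proof -
  have "summable (\<lambda>j. 4/pi * lam j ^ n * (pi/4)) \<and>
     ((\<lambda>x. \<Sum>j. 4/pi * lam j ^ n * (cc j x * cc j x)) has_integral
        (\<Sum>j. 4/pi * lam j ^ n * (pi/4))) {0..pi/2}"
  proof (rule series_has_integral)
    show "continuous_on {0..pi/2} (\<lambda>x. 4/pi * lam j ^ n * (cc j x * cc j x))" for j
      unfolding cc_def by (intro continuous_intros)
    show "\<bar>4/pi * lam j ^ n * (cc j x * cc j x)\<bar> \<le> 4/pi * (1 / oj j ^ 2)" for j x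
      using Fk_term_bound[OF assms, of j x x] by (simp add: mult_ac)
    show "summable (\<lambda>j. 4/pi * (1 / oj j ^ 2))" by (rule summable_Fk_bound)
    show "((\<lambda>x. 4/pi * lam j ^ n * (cc j x * cc j x)) has_integral 4/pi * lam j ^ n * (pi/4)) {0..pi/2}" for j
      by (intro has_integral_mult_right cc_sq_has_integral)
  qed
  then show ?thesis unfolding Fk_def by (simp add: mult_ac)
qed



lemma Wk_zero: "x \<ge> pi/2 \<Longrightarrow> Wk m x z = 0"
  by (induction m arbitrary: z) (auto simp: w_def indicator_def)

lemma emeasure_Ioo_any: "emeasure lborel {0<..<c::real} = ennreal c"
  by (cases "c \<ge> 0") (auto simp: ennreal_neg)

lemma Wk_formula:
  assumes x: "0 \<le> x" "x < pi/2"
  shows "(\<forall>y. Wk (Suc m) x y = ennreal (indicator {0<..<pi/2} y * Fk (m+2) x y)) \<and>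
         (\<forall>y\<in>{0..pi/2}. Fk (m+2) x y \<ge> 0)"
proof (induction m)
  case 0
  have W: "Wk (Suc 0) x y = ennreal (indicator {0<..<pi/2} y * Fk 2 x y)" for y
  proof -
    have "Wk (Suc 0) x y = (\<integral>\<^sup>+z. indicator {0<..<pi/2} y * indicator {0<..<pi/2 - max x y} z \<partial>lborel)"
      unfolding Wk.simps by (rule nn_integral_cong) (auto simp: w_def indicator_def)
    also have "\<dots> = indicator {0<..<pi/2} y * ennreal (pi/2 - max x y)"
      by (simp add: nn_integral_cmult emeasure_Ioo_any)
    also have "\<dots> = ennreal (indicator {0<..<pi/2} y * Fk 2 x y)"
      using x by (auto simp: indicator_def Fk2)
    finally show ?thesis .
  qed
  have "Fk 2 x y \<ge> 0" if "y \<in> {0..pi/2}" for y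
    using that x by (simp add: Fk2 max_def)
  with W show ?case by (simp add: numeral_2_eq_2)
next
  case (Suc m)
  then have IH1: "\<And>y. Wk (Suc m) x y = ennreal (indicator {0<..<pi/2} y * Fk (m+2) x y)"
    and IH2: "\<And>y. y \<in> {0..pi/2} \<Longrightarrow> Fk (m+2) x y \<ge> 0" by auto
  have int: "((\<lambda>z. Fk (m+2) x z) has_integral Fk (m+3) x y) {0..pi/2 - y}" if "y \<le> pi/2" for y
    using Fk_step[of "m+2" y x] that by (simp add: numeral_3_eq_3)
  have W: "Wk (Suc (Suc m)) x y = ennreal (indicator {0<..<pi/2} y * Fk (m+3) x y)" for y
  proof -
    have "Wk (Suc (Suc m)) x y = (\<integral>\<^sup>+z. indicator {0<..<pi/2} y * (ennreal (Fk (m+2) x z) * indicator {0<..<pi/2 - y} z) \<partial>lborel)"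
      unfolding Wk.simps(2)[of "Suc m"] IH1
      by (intro nn_integral_cong) (auto simp: w_def indicator_def)
    also have "\<dots> = ennreal (indicator {0<..<pi/2} y * Fk (m+3) x y)"
    proof (cases "y \<in> {0<..<pi/2}")
      case True
      have "(\<integral>\<^sup>+z. ennreal (Fk (m+2) x z) * indicator {0<..<pi/2 - y} z \<partial>lborel) = ennreal (Fk (m+3) x y)"
      proof (rule nn_integral_has_integral_lebesgue')
        show "0 \<le> Fk (m+2) x z" if "z \<in> {0<..<pi/2 - y}" for z
          using that True by (intro IH2) auto
        show "((\<lambda>z. Fk (m+2) x z) has_integral Fk (m+3) x y) {0<..<pi/2 - y}"
          using int[of y] True by (simp add: has_integral_Icc_iff_Ioo)
      qed
      then show ?thesis using True by simp
    next
      case False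
      then show ?thesis by simp
    qed
    finally show ?thesis .
  qed
  have "Fk (m+3) x y \<ge> 0" if "y \<in> {0..pi/2}" for y
  proof (rule has_integral_nonneg[OF int])
    show "y \<le> pi/2" using that by simp
    show "0 \<le> Fk (m+2) x z" if "z \<in> {0..pi/2 - y}" for z
      using that \<open>y \<in> {0..pi/2}\<close> by (intro IH2) auto
  qed
  with W show ?case by (simp add: numeral_3_eq_3)
qed



definition hz :: "nat \<Rightarrow> int" where
  "hz j = (if even j then int (j div 2) else - int (j div 2) - 1)"

definition hzinv :: "int \<Rightarrow> nat" where
  "hzinv k = (if k \<ge> 0 then 2 * nat k else 2 * nat (-k-1) + 1)"

lemma hz_bij: "bij_betw hz UNIV UNIV"
proof (rule bij_betw_byWitness[where f'=hzinv])
  show "\<forall>a\<in>UNIV. hzinv (hz a) = a"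
    by (auto simp: hz_def hzinv_def elim!: oddE)
  show "\<forall>a'\<in>UNIV. hz (hzinv a') = a'"
    by (auto simp: hz_def hzinv_def)
qed auto

lemma hz_val: "real_of_int (4 * hz j + 1) = (-1)^j * oj j"
  by (cases "even j") (auto simp: hz_def oj_def elim!: evenE oddE)

lemma hz_term: "1 / (real_of_int (4 * hz j + 1)) ^ n = lam j ^ n"
proof -
  have "1 / ((-1)^j * oj j) = ((-1::real)^j / oj j)"
    by (cases "even j") auto
  then show ?thesis unfolding hz_val lam_def by (simp add: power_one_over[symmetric])
qed

lemma S_sum_eq:
  assumes "n \<ge> 2"
  shows "S_sum n = (\<Sum>j. lam j ^ n)"
proof -
  have sn: "summable (\<lambda>j. norm (lam j ^ n))"
  proof (rule summable_comparison_test[OF _ summable_odd_sq])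
    show "\<exists>N. \<forall>j\<ge>N. norm (norm (lam j ^ n)) \<le> 1 / real (2*j+1)^2"
      using lam_pow_bound[OF assms] by (auto simp: oj_def)
  qed
  have s: "summable (\<lambda>j. lam j ^ n)" using summable_norm_cancel[OF sn] .
  have "((\<lambda>j. lam j ^ n) has_sum (\<Sum>j. lam j ^ n)) UNIV"
    by (rule norm_summable_imp_has_sum[OF sn summable_sums[OF s]])
  then have "((\<lambda>j. 1 / (real_of_int (4 * hz j + 1)) ^ n) has_sum (\<Sum>j. lam j ^ n)) UNIV"
    by (simp only: hz_term)
  then have "((\<lambda>k::int. 1 / (real_of_int (4 * k + 1)) ^ n) has_sum (\<Sum>j. lam j ^ n)) UNIV"
    using has_sum_reindex_bij_betw[OF hz_bij, of "\<lambda>k. 1 / (real_of_int (4 * k + 1)) ^ n"] by simp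
  then show ?thesis unfolding S_sum_def by (rule infsumI)
qed

theorem theorem1:
  fixes n :: nat
  assumes "n \<ge> 2"
  shows "emeasure (PiM {0..<n} (\<lambda>_. lborel)) (Pi_poly n) = ennreal (S_sum n)"
proof -
  obtain k where n: "n = Suc (Suc k)" using assms by (metis add_2_eq_Suc le_Suc_ex)
  have "emeasure (PiM {0..<n} (\<lambda>_. lborel)) (Pi_poly n) = (\<integral>\<^sup>+x. indicator {0<..} x * Wk (Suc k) x x \<partial>lborel)"
    unfolding n by (rule vol_reduce)
  also have "\<dots> = (\<integral>\<^sup>+x. ennreal (Fk n x x) * indicator {0<..<pi/2} x \<partial>lborel)"
  proof (rule nn_integral_cong)
    fix x :: real
    show "indicator {0<..} x * Wk (Suc k) x x = ennreal (Fk n x x) * indicator {0<..<pi/2} x"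
    proof (cases "x \<in> {0<..<pi/2}")
      case True
      then have "Wk (Suc k) x x = ennreal (indicator {0<..<pi/2} x * Fk (k+2) x x)"
        using Wk_formula[of x k] by auto
      then show ?thesis using True by (simp add: n)
    next
      case False
      then have "x \<le> 0 \<or> x \<ge> pi/2" by auto
      then show ?thesis using False Wk_zero[of x] by auto
    qed
  qed
  also have "\<dots> = ennreal (\<Sum>j. lam j ^ n)"
  proof (rule nn_integral_has_integral_lebesgue')
    show "0 \<le> Fk n x x" if "x \<in> {0<..<pi/2}" for x
      using Wk_formula[of x k] that by (auto simp: n)
    show "((\<lambda>x. Fk n x x) has_integral (\<Sum>j. lam j ^ n)) {0<..<pi/2}"
      using Fk_diag_has_integral[OF assms] by (simp add: has_integral_Icc_iff_Ioo)
  qed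
  also have "\<dots> = ennreal (S_sum n)" using S_sum_eq[OF assms] by simp
  finally show ?thesis .
qed

end
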